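(* Continuity of the value function of a zero-sum game fails in general under weak or setwise convergence of information structures: there exist a two-player zero-sum game $g$ satisfying Assumptions A2 and A4, a fixed prior $\zeta$, and a sequence of information structures $\mu_n$ with $\mathbb{X}$-marginal $\zeta$ converging weakly to an information structure $\mu$ with $\mathbb{X}$-marginal $\zeta$ such that $J^*(g,\mu_n)\not\to J^*(g,\mu)$; and likewise there exist such examples in which $\mu_n\to\mu$ setwise but $J^*(g,\mu_n)\not\to J^*(g,\mu)$.
   Context: $\mathbb{X},\mathbb{Y}^1,\mathbb{Y}^2$ are standard Borel spaces. An information structure is a probability measure $\mu$ on $\mathbb{X}\times\mathbb{Y}^1\times\mathbb{Y}^2$; its $\mathbb{X}$-marginal is the prior. A zero-sum game is $g=(c,\mathbb{U}^1,\mathbb{U}^2)$ with standard Borel action spaces and measurable cost $c:\mathbb{X}\times\mathbb{U}^1\times\mathbb{U}^2\to\mathbb{R}$; policies are measurable $\gamma^i:\mathbb{Y}^i\to\mathbb{U}^i$; $J(g,\mu,\gamma^1,\gamma^2)=\int c(x,\gamma^1(y^1),\gamma^2(y^2))\,d\mu$, Player 1 minimizes and Player 2 maximizes, and $J^*(g,\mu)$ is the value at a saddle-point equilibrium. Weak convergence: $\int f d\mu_n\to\int f d\mu$ for all bounded continuous $f$; setwise convergence: for all bounded measurable $f$ (equivalently $\mu_n(A)\to\mu(A)$ for all Borel $A$). A2: the cost is continuous and bounded. A4: each action space is compact. *)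

theory Defs
  imports "HOL-Probability.Probability"
begin

text \<open>Concrete standard Borel spaces: X = Y1 = Y2 = real (with the Euclidean topology and
its Borel sigma-algebra); action spaces are compact subsets of real.\<close>

type_synonym info = "(real \<times> real \<times> real) measure"

definition info_structure :: "info \<Rightarrow> bool" where
  "info_structure \<mu> \<longleftrightarrow> prob_space \<mu> \<and> sets \<mu> = sets borel"

definition prior :: "info \<Rightarrow> real measure" where
  "prior \<mu> = distr \<mu> borel fst"

definition A2 :: "(real \<times> real \<times> real \<Rightarrow> real) \<Rightarrow> real set \<Rightarrow> real set \<Rightarrow> bool" where
  "A2 c U1 U2 \<longleftrightarrow> continuous_on (UNIV \<times> U1 \<times> U2) c \<and> bounded (c ` (UNIV \<times> U1 \<times> U2))"

definition A4 :: "real set \<Rightarrow> real set \<Rightarrow> bool" where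
  "A4 U1 U2 \<longleftrightarrow> compact U1 \<and> compact U2 \<and> U1 \<noteq> {} \<and> U2 \<noteq> {}"

definition policy :: "real set \<Rightarrow> (real \<Rightarrow> real) \<Rightarrow> bool" where
  "policy U \<gamma> \<longleftrightarrow> \<gamma> \<in> borel_measurable borel \<and> range \<gamma> \<subseteq> U"

definition J :: "(real \<times> real \<times> real \<Rightarrow> real) \<Rightarrow> info \<Rightarrow> (real \<Rightarrow> real) \<Rightarrow> (real \<Rightarrow> real) \<Rightarrow> real" where
  "J c \<mu> \<gamma>1 \<gamma>2 = (\<integral>(x, y1, y2). c (x, \<gamma>1 y1, \<gamma>2 y2) \<partial>\<mu>)"

definition saddle :: "(real \<times> real \<times> real \<Rightarrow> real) \<Rightarrow> real set \<Rightarrow> real set \<Rightarrow> info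
    \<Rightarrow> (real \<Rightarrow> real) \<Rightarrow> (real \<Rightarrow> real) \<Rightarrow> bool" where
  "saddle c U1 U2 \<mu> \<gamma>1 \<gamma>2 \<longleftrightarrow> policy U1 \<gamma>1 \<and> policy U2 \<gamma>2 \<and>
     (\<forall>\<delta>1 \<delta>2. policy U1 \<delta>1 \<and> policy U2 \<delta>2 \<longrightarrow>
        J c \<mu> \<gamma>1 \<delta>2 \<le> J c \<mu> \<gamma>1 \<gamma>2 \<and> J c \<mu> \<gamma>1 \<gamma>2 \<le> J c \<mu> \<delta>1 \<gamma>2)"

definition weak_conv_info :: "(nat \<Rightarrow> info) \<Rightarrow> info \<Rightarrow> bool" where
  "weak_conv_info \<mu>s \<mu> \<longleftrightarrow> (\<forall>f :: real \<times> real \<times> real \<Rightarrow> real.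
     continuous_on UNIV f \<and> bounded (range f) \<longrightarrow>
     (\<lambda>n. \<integral>z. f z \<partial>(\<mu>s n)) \<longlonglongrightarrow> (\<integral>z. f z \<partial>\<mu>))"

definition setwise_conv :: "(nat \<Rightarrow> info) \<Rightarrow> info \<Rightarrow> bool" where
  "setwise_conv \<mu>s \<mu> \<longleftrightarrow> (\<forall>A \<in> sets borel. (\<lambda>n. measure (\<mu>s n) A) \<longlonglongrightarrow> measure \<mu> A)"

text \<open>J* is the value at a saddle point (unique when saddle points exist); we require
  saddle points to exist so that J* is defined.\<close>
definition value_discontinuity :: "((nat \<Rightarrow> info) \<Rightarrow> info \<Rightarrow> bool) \<Rightarrow> bool" where
  "value_discontinuity conv \<longleftrightarrow>
    (\<exists>c U1 U2 \<zeta> \<mu>s \<mu> \<gamma>s1 \<gamma>s2 \<gamma>1 \<gamma>2.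
       A2 c U1 U2 \<and> A4 U1 U2 \<and>
       info_structure \<mu> \<and> (\<forall>n. info_structure (\<mu>s n)) \<and>
       prior \<mu> = \<zeta> \<and> (\<forall>n. prior (\<mu>s n) = \<zeta>) \<and>
       conv \<mu>s \<mu> \<and>
       (\<forall>n. saddle c U1 U2 (\<mu>s n) (\<gamma>s1 n) (\<gamma>s2 n)) \<and> saddle c U1 U2 \<mu> \<gamma>1 \<gamma>2 \<and>
       \<not> ((\<lambda>n. J c (\<mu>s n) (\<gamma>s1 n) (\<gamma>s2 n)) \<longlonglongrightarrow> J c \<mu> \<gamma>1 \<gamma>2))"

end

theory Submission imports Defs begin

named_theorems bnd_intros


definition M :: "real measure" where
  "M = density lborel (\<lambda>t. ennreal (indicator {-1<..<1} t))"

lemma sets_M[simp, measurable_cong]: "sets M = sets borel" by (simp add: M_def)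
lemma space_M[simp]: "space M = UNIV" by (simp add: M_def)
lemma measurable_M[simp]: "measurable M N = measurable borel N"
  by (simp add: measurable_def)

lemma finite_M: "finite_measure M"
proof
  have "emeasure M (space M) = (\<integral>\<^sup>+ t. ennreal (indicator {-1<..<1::real} t) \<partial>lborel)"
    by (simp add: M_def emeasure_density)
  also have "\<dots> = emeasure lborel {-1<..<1::real}"
    by (subst ennreal_indicator, subst nn_integral_indicator) auto
  finally show "emeasure M (space M) \<noteq> \<infinity>" by simp
qed

lemma integral_M:
  assumes [measurable]: "f \<in> borel_measurable borel"
  shows "integral\<^sup>L M f = (LBINT t=-1..1. f t)"
proof -
  have m: "(-1::ereal) = ereal (-1)" by (simp add: one_ereal_def)
  have e: "einterval (-1) 1 = {-1<..<1::real}" by (metis einterval_eq_Icc m one_ereal_def)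
  have le: "(-1::ereal) \<le> 1" by (simp add: m)
  show ?thesis unfolding M_def using le
  by (subst integral_density) (auto simp: interval_lebesgue_integral_def set_lebesgue_integral_def e)
qed

lemma ereal_m1: "(-1::ereal) = ereal (-1)" by (simp add: one_ereal_def)

lemma FTC11:
  fixes f F :: "real \<Rightarrow> real"
  assumes "continuous_on {-1..1} f"
    and "\<And>x. -1 \<le> x \<Longrightarrow> x \<le> 1 \<Longrightarrow> (F has_real_derivative f x) (at x)"
  shows "(LBINT t=-1..1. f t) = F 1 - F (-1)"
proof -
  have "(LBINT t=ereal (-1)..ereal 1. f t) = F 1 - F (-1)"
    using assms by (intro interval_integral_FTC_finite)
      (auto simp: has_real_derivative_iff_has_vector_derivative[symmetric] intro: has_field_derivative_at_within)
  then show ?thesis by (simp add: ereal_m1 one_ereal_def)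
qed

lemma FTC01:
  fixes f F :: "real \<Rightarrow> real"
  assumes "continuous_on {0..1} f"
    and "\<And>x. 0 \<le> x \<Longrightarrow> x \<le> 1 \<Longrightarrow> (F has_real_derivative f x) (at x)"
  shows "(LBINT t=0..1. f t) = F 1 - F 0"
proof -
  have "(LBINT t=ereal 0..ereal 1. f t) = F 1 - F 0"
    using assms by (intro interval_integral_FTC_finite)
      (auto simp: has_real_derivative_iff_has_vector_derivative[symmetric] intro: has_field_derivative_at_within)
  then show ?thesis by (simp add: zero_ereal_def one_ereal_def)
qed

lemma cos_int:
  fixes m :: int
  shows "(LBINT t=-1..1. cos (2*pi*m*t)) = (if m = 0 then 2 else 0)"
proof (cases "m = 0")
  case True
  have m: "(-1::ereal) = ereal (-1)" by (simp add: one_ereal_def)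
  have "(LBINT t=ereal (-1)..ereal 1. (1::real)) = 1 - (-1)"
    by (rule interval_integral_FTC_finite[where F="\<lambda>t. t"])
       (auto intro!: continuous_intros derivative_eq_intros
           simp: has_real_derivative_iff_has_vector_derivative[symmetric])
  then have "(LBINT t=-1..1. (1::real)) = 2" by (metis m one_ereal_def numeral_One one_add_one diff_minus_eq_add)
  then show ?thesis using True by simp
next
  case False
  have "(LBINT t=-1..1. cos (2*pi*m*t)) = sin (2*pi*m*1)/(2*pi*m) - sin (2*pi*m*(-1))/(2*pi*m)"
    by (rule FTC11)
       (use False in \<open>auto intro!: continuous_intros derivative_eq_intros\<close>)
  also have "\<dots> = 0"
    using sin_int_2pin[of m] sin_int_2pin[of "-m"] by (simp add: mult.commute)
  finally show ?thesis using False by simp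
qed

lemma integral_M_lborel:
  fixes f :: "real \<Rightarrow> real"
  assumes [measurable]: "f \<in> borel_measurable borel"
  shows "integral\<^sup>L M f = (\<integral>t. indicator {-1<..<1} t * f t \<partial>lborel)"
  unfolding M_def by (subst integral_density) auto

lemma intM:
  fixes f :: "real \<Rightarrow> real"
  assumes "f \<in> borel_measurable borel" "\<And>t. \<bar>f t\<bar> \<le> B"
  shows "integrable M f"
  using assms by (intro finite_measure.integrable_const_bound[OF finite_M, where B=B]) auto

lemma odd_M:
  fixes f :: "real \<Rightarrow> real"
  assumes [measurable]: "f \<in> borel_measurable borel" and odd: "\<And>t. f (-t) = - f t"
  shows "integral\<^sup>L M f = 0"
proof -
  define G where "G t = indicator {-1<..<1::real} t * f t" for t
  have "(\<integral>t. G t \<partial>lborel) = \<bar>-1\<bar> *\<^sub>R (\<integral>x. G (0 + (-1) * x) \<partial>lborel)"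
    by (rule lborel_integral_real_affine) simp
  also have "\<dots> = (\<integral>x. G (-x) \<partial>lborel)" by simp
  also have "\<dots> = (\<integral>x. - G x \<partial>lborel)"
  proof -
    have "G (-x) = - G x" for x by (auto simp: G_def odd indicator_def)
    then show ?thesis by simp
  qed
  also have "\<dots> = - (\<integral>x. G x \<partial>lborel)" by simp
  finally have "(\<integral>t. G t \<partial>lborel) = 0" by simp
  then show ?thesis by (simp add: integral_M_lborel G_def)
qed

lemma cosM:
  fixes m :: int
  shows "integral\<^sup>L M (\<lambda>t. cos (2*pi*m*t)) = (if m = 0 then 2 else 0)"
  by (subst integral_M) (auto simp: cos_int)

definition sn :: "nat \<Rightarrow> real \<Rightarrow> real" where
  "sn k t = sin (2*pi*real (Suc k)*t)"

lemma sn_meas[measurable]: "sn k \<in> borel_measurable borel"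
  unfolding sn_def by (intro borel_measurable_continuous_onI continuous_intros)

lemma sn_bound: "\<bar>sn k t\<bar> \<le> 1" unfolding sn_def by simp

lemma sn_odd: "sn k (-t) = - sn k t" unfolding sn_def by simp

lemma sn_orth: "integral\<^sup>L M (\<lambda>t. sn j t * sn k t) = (if j = k then 1 else 0)"
proof -
  have "(\<lambda>t. sn j t * sn k t) = (\<lambda>t. (cos (2*pi*real_of_int (int j - int k)*t) - cos (2*pi*real_of_int (int j + int k + 2)*t)) / 2)"
    by (auto simp: sn_def sin_times_sin algebra_simps)
  then have "integral\<^sup>L M (\<lambda>t. sn j t * sn k t) =
     (integral\<^sup>L M (\<lambda>t. cos (2*pi*real_of_int (int j - int k)*t)) - integral\<^sup>L M (\<lambda>t. cos (2*pi*real_of_int (int j + int k + 2)*t))) / 2"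
  proof -
    have i: "integrable M (\<lambda>t. cos (2*pi*m*t))" for m :: real
      by (rule intM[where B=1]) (auto intro!: borel_measurable_continuous_onI continuous_intros)
    show ?thesis by (subst \<open>(\<lambda>t. sn j t * sn k t) = _\<close>) (simp add: i)
  qed
  also have "\<dots> = (if j = k then 1 else 0)"
    by (simp only: cosM) auto
  finally show ?thesis .
qed

lemma bessel:
  fixes h :: "real \<Rightarrow> real"
  assumes hm[measurable]: "h \<in> borel_measurable borel" and hb: "\<And>t. \<bar>h t\<bar> \<le> B"
  shows "(\<lambda>k. integral\<^sup>L M (\<lambda>t. sn k t * h t)) \<longlonglongrightarrow> 0"
proof -
  define a where "a k = integral\<^sup>L M (\<lambda>t. sn k t * h t)" for k
  have B0: "0 \<le> B" using hb[of 0] by simp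
  have ish: "integrable M (\<lambda>t. sn k t * h t)" for k
  proof (rule intM[where B=B])
    fix t have "\<bar>sn k t\<bar> * \<bar>h t\<bar> \<le> 1 * B" by (rule mult_mono[OF sn_bound hb]) simp_all
    then show "\<bar>sn k t * h t\<bar> \<le> B" by (simp add: abs_mult)
  qed simp
  have iss: "integrable M (\<lambda>t. sn j t * sn k t)" for j k
  proof (rule intM[where B=1])
    fix t have "\<bar>sn j t\<bar> * \<bar>sn k t\<bar> \<le> 1 * 1" by (rule mult_mono[OF sn_bound sn_bound]) simp_all
    then show "\<bar>sn j t * sn k t\<bar> \<le> 1" by (simp add: abs_mult)
  qed simp
  have ihh: "integrable M (\<lambda>t. (h t)\<^sup>2)"
  proof (rule intM[where B="B^2"])
    fix t have "\<bar>h t\<bar>^2 \<le> B^2" by (rule power_mono[OF hb]) simp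
    then show "\<bar>(h t)\<^sup>2\<bar> \<le> B^2" by simp
  qed simp
  have hh: "integral\<^sup>L M (\<lambda>t. (h t)\<^sup>2) \<le> 2 * B^2"
  proof -
    have "integral\<^sup>L M (\<lambda>t. (h t)\<^sup>2) \<le> integral\<^sup>L M (\<lambda>t. B^2)"
      by (rule integral_mono[OF ihh]) (auto intro!: finite_measure.integrable_const[OF finite_M] power_mono[OF hb, of _ 2, simplified])
    also have "\<dots> = 2 * B^2"
    proof -
      have "integral\<^sup>L M (\<lambda>t. 1::real) = 2" using cosM[of 0] by simp
      moreover have "integral\<^sup>L M (\<lambda>t. B^2) = B^2 * integral\<^sup>L M (\<lambda>t. 1::real)" by simp
      ultimately show ?thesis by simp
    qed
    finally show ?thesis .
  qed
  have bnd: "(\<Sum>k<N. (a k)\<^sup>2) \<le> 2 * B^2" for N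
  proof -
    define S where "S t = (\<Sum>k<N. a k * sn k t)" for t
    have ex: "(h t - S t)\<^sup>2 = (h t)\<^sup>2 - 2 * (\<Sum>k<N. a k * (sn k t * h t)) + (\<Sum>j<N. \<Sum>k<N. a j * a k * (sn j t * sn k t))" for t
    proof -
      have "(S t)\<^sup>2 = (\<Sum>j<N. \<Sum>k<N. a j * a k * (sn j t * sn k t))"
        unfolding S_def power2_eq_square sum_product by (simp add: algebra_simps)
      moreover have "h t * S t = (\<Sum>k<N. a k * (sn k t * h t))"
        unfolding S_def sum_distrib_left by (simp add: algebra_simps)
      ultimately show ?thesis by (simp add: power2_diff)
    qed
    have "0 \<le> integral\<^sup>L M (\<lambda>t. (h t - S t)\<^sup>2)" by simp
    also have "\<dots> = integral\<^sup>L M (\<lambda>t. (h t)\<^sup>2) - 2 * (\<Sum>k<N. a k * a k) + (\<Sum>j<N. \<Sum>k<N. a j * a k * (if j = k then 1 else 0))"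
      unfolding ex
      by (simp add: ihh ish iss a_def sn_orth integrable_sum)
    also have "\<dots> = integral\<^sup>L M (\<lambda>t. (h t)\<^sup>2) - (\<Sum>k<N. (a k)\<^sup>2)"
      by (simp add: if_distrib sum.delta power2_eq_square cong: if_cong)
    finally show ?thesis using hh by simp
  qed
  have "summable (\<lambda>k. (a k)\<^sup>2)"
    by (rule summableI_nonneg_bounded[OF _ bnd]) simp
  then have "(\<lambda>k. (a k)\<^sup>2) \<longlonglongrightarrow> 0" by (rule summable_LIMSEQ_zero)
  then have "(\<lambda>k. sqrt ((a k)\<^sup>2)) \<longlonglongrightarrow> sqrt 0" by (rule tendsto_real_sqrt)
  then have "(\<lambda>k. \<bar>a k\<bar>) \<longlonglongrightarrow> 0" by simp
  then show ?thesis unfolding a_def[symmetric] by (simp add: tendsto_rabs_zero_iff)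
qed

definition bnd :: "(real \<Rightarrow> real) \<Rightarrow> bool" where
  "bnd f \<longleftrightarrow> (\<exists>B. \<forall>t. \<bar>f t\<bar> \<le> B)"

lemma bnd_const[bnd_intros]: "bnd (\<lambda>t. c)" unfolding bnd_def by auto
lemma bnd_add[bnd_intros]: "bnd f \<Longrightarrow> bnd g \<Longrightarrow> bnd (\<lambda>t. f t + g t)"
  unfolding bnd_def by (metis abs_triangle_ineq add_mono order_trans)
lemma bnd_diff[bnd_intros]: "bnd f \<Longrightarrow> bnd g \<Longrightarrow> bnd (\<lambda>t. f t - g t)"
  unfolding bnd_def by (metis abs_triangle_ineq4 add_mono order_trans)
lemma bnd_mult[bnd_intros]: "bnd f \<Longrightarrow> bnd g \<Longrightarrow> bnd (\<lambda>t. f t * g t)"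
proof -
  assume "bnd f" "bnd g"
  then obtain A B where A: "\<And>t. \<bar>f t\<bar> \<le> A" and B: "\<And>t. \<bar>g t\<bar> \<le> B" unfolding bnd_def by blast
  have "\<bar>f t * g t\<bar> \<le> A * B" for t
    unfolding abs_mult by (rule mult_mono[OF A B]) (use A[of t] in auto)
  then show ?thesis unfolding bnd_def by blast
qed
lemma bnd_divide[bnd_intros]: "bnd f \<Longrightarrow> bnd (\<lambda>t. f t / c)"
  using bnd_mult[OF _ bnd_const, of f "1/c"] by simp
lemma bnd_power[bnd_intros]: "bnd f \<Longrightarrow> bnd (\<lambda>t. f t ^ n)"
  by (induction n) (auto intro: bnd_const bnd_mult)
lemma bnd_comp: "bnd f \<Longrightarrow> bnd (\<lambda>t. f (g t))"
  unfolding bnd_def by auto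
lemma bnd_minus[bnd_intros]: "bnd f \<Longrightarrow> bnd (\<lambda>t. - f t)"
  unfolding bnd_def by auto
lemma bnd_sgn[bnd_intros]: "bnd (\<lambda>t::real. sgn t)"
  unfolding bnd_def by (rule exI[of _ 1]) (simp add: abs_sgn)
lemma bnd_id_comp: "(\<And>t. \<bar>f t\<bar> \<le> B) \<Longrightarrow> bnd f"
  unfolding bnd_def by blast

lemma intM':
  fixes f :: "real \<Rightarrow> real"
  assumes "f \<in> borel_measurable borel" "bnd f"
  shows "integrable M f"
  using assms unfolding bnd_def by (metis intM)

definition Phi :: "real \<Rightarrow> real \<times> real \<times> real" where
  "Phi t = (sgn t, \<bar>t\<bar>, 0)"

lemma Phi_meas[measurable]: "Phi \<in> borel_measurable borel"
  unfolding Phi_def by measurable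

definition mu :: "(real \<Rightarrow> real) \<Rightarrow> info" where
  "mu s = distr (density M (\<lambda>t. ennreal ((1 + s t) / 2))) borel Phi"

definition good :: "(real \<Rightarrow> real) \<Rightarrow> bool" where
  "good s \<longleftrightarrow> s \<in> borel_measurable borel \<and> (\<forall>t. \<bar>s t\<bar> \<le> 1) \<and> (\<forall>t. s (-t) = - s t)
     \<and> integral\<^sup>L M (\<lambda>t. s t * sgn t) = 0"

lemma sets_mu[simp, measurable_cong]: "sets (mu s) = sets borel" by (simp add: mu_def)
lemma space_mu[simp]: "space (mu s) = UNIV" by (simp add: mu_def)

lemma integral_mu:
  fixes F :: "real \<times> real \<times> real \<Rightarrow> real"
  assumes "good s" and [measurable]: "F \<in> borel_measurable borel"
  shows "integral\<^sup>L (mu s) F = integral\<^sup>L M (\<lambda>t. (1 + s t) / 2 * F (Phi t))"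
proof -
  have [measurable]: "s \<in> borel_measurable borel" and b: "\<And>t. \<bar>s t\<bar> \<le> 1" using assms(1) by (auto simp: good_def)
  have nn: "0 \<le> 1 + s t" for t using b[of t] by auto
  show ?thesis unfolding mu_def
    apply (subst integral_distr)
      apply simp
     apply simp
    apply (subst integral_density)
    using nn by (auto intro!: AE_I2)
qed

lemma good_odd_int:
  assumes "good s" shows "integral\<^sup>L M s = 0"
  using assms by (intro odd_M) (auto simp: good_def)

lemma good_s0: "good s \<Longrightarrow> s 0 = 0"
  unfolding good_def by (metis add.inverse_neutral equation_minus_iff minus_equation_iff neg_equal_zero)

lemma one_M: "integral\<^sup>L M (\<lambda>t. 1::real) = 2" using cosM[of 0] by simp

lemma prob_mu: assumes "good s" shows "prob_space (mu s)"
proof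
  have [measurable]: "s \<in> borel_measurable borel" and b: "\<And>t. \<bar>s t\<bar> \<le> 1" using assms by (auto simp: good_def)
  have nn: "0 \<le> 1 + s t" for t using b[of t] by auto
  have i: "integrable M (\<lambda>t. (1 + s t) / 2)"
    by (intro intM' bnd_intros bnd_id_comp[OF b]) auto
  have is': "integrable M s" by (intro intM' bnd_id_comp[OF b]) auto
  have "emeasure (mu s) (space (mu s)) = emeasure (density M (\<lambda>t. ennreal ((1 + s t) / 2))) UNIV"
    by (simp add: mu_def emeasure_distr)
  also have "\<dots> = (\<integral>\<^sup>+ t. ennreal ((1 + s t) / 2) \<partial>M)"
    by (simp add: emeasure_density)
  also have "\<dots> = ennreal (integral\<^sup>L M (\<lambda>t. (1 + s t) / 2))"
    by (rule nn_integral_eq_integral[OF i]) (use nn in \<open>auto intro!: AE_I2\<close>)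
  also have "integral\<^sup>L M (\<lambda>t. (1 + s t) / 2) = 1"
    using good_odd_int[OF assms] one_M is' by (simp add: finite_measure.integrable_const[OF finite_M])
  finally show "emeasure (mu s) (space (mu s)) = 1" by simp
qed

lemma intM_interval:
  fixes f :: "real \<Rightarrow> real"
  assumes [measurable]: "f \<in> borel_measurable borel" and i: "integrable M f"
  shows "interval_lebesgue_integrable lborel (ereal (-1)) (ereal 1) f"
proof -
  have "integrable lborel (\<lambda>x. indicator {-1<..<1} x *\<^sub>R f x)"
    using i unfolding M_def by (subst (asm) integrable_density) auto
  then show ?thesis
    by (simp add: interval_lebesgue_integrable_def set_integrable_def)
qed

lemma sn_sgn: "integral\<^sup>L M (\<lambda>t. sn k t * sgn t) = 0"
proof -
  define f where "f t = sn k t * sgn t" for t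
  define c where "c = 2*pi*real (Suc k)"
  have c0: "c \<noteq> 0" by (simp add: c_def)
  have [measurable]: "f \<in> borel_measurable borel" unfolding f_def by measurable
  have iM: "integrable M f" unfolding f_def
    by (intro intM' bnd_intros bnd_id_comp[OF sn_bound]) auto
  have "integral\<^sup>L M f = (LBINT t=ereal (-1)..ereal 1. f t)"
    using integral_M[of f] ereal_m1 one_ereal_def by (metis \<open>f \<in> borel_measurable borel\<close>)
  also have "\<dots> = (LBINT t=ereal (-1)..ereal 0. f t) + (LBINT t=ereal 0..ereal 1. f t)"
    by (rule interval_integral_sum[symmetric]) (simp add: intM_interval[OF _ iM])
  also have "(LBINT t=ereal 0..ereal 1. f t) = (LBINT t=ereal 0..ereal 1. sn k t)"
    by (rule interval_integral_cong) (auto simp: f_def)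
  also have "\<dots> = (- cos (c*1)/c) - (- cos (c*0)/c)"
    unfolding sn_def c_def[symmetric]
    by (rule interval_integral_FTC_finite)
       (use c0 in \<open>auto intro!: continuous_intros derivative_eq_intros
          simp: has_real_derivative_iff_has_vector_derivative[symmetric]\<close>)
  also have "(LBINT t=ereal (-1)..ereal 0. f t) = (LBINT t=ereal (-1)..ereal 0. - sn k t)"
    by (rule interval_integral_cong) (auto simp: f_def)
  also have "\<dots> = (cos (c*0)/c) - (cos (c*(-1))/c)"
    unfolding sn_def c_def[symmetric]
    by (rule interval_integral_FTC_finite)
       (use c0 in \<open>auto intro!: continuous_intros derivative_eq_intros
          simp: has_real_derivative_iff_has_vector_derivative[symmetric]\<close>)
  finally have "integral\<^sup>L M f = cos (c*0)/c - cos (c*(-1))/c + ((- cos (c*1)/c) - (- cos (c*0)/c))" .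
  moreover have "cos c = 1" unfolding c_def using cos_int_2pin[of "int (Suc k)"] by simp
  ultimately have "integral\<^sup>L M f = 0" by simp
  then show ?thesis unfolding f_def .
qed

lemma good_sn: "good (sn k)"
  unfolding good_def using sn_bound sn_odd sn_sgn by auto

lemma good_0: "good (\<lambda>_. 0)"
  unfolding good_def by simp

lemma conv_mu:
  fixes F :: "real \<times> real \<times> real \<Rightarrow> real"
  assumes [measurable]: "F \<in> borel_measurable borel" and Fb: "\<And>z. \<bar>F z\<bar> \<le> B"
  shows "(\<lambda>n. integral\<^sup>L (mu (sn n)) F) \<longlonglongrightarrow> integral\<^sup>L (mu (\<lambda>_. 0)) F"
proof -
  have iF: "integrable M (\<lambda>t. F (Phi t))"
    by (intro intM' bnd_id_comp[where B=B] Fb) auto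
  have isF: "integrable M (\<lambda>t. sn n t * F (Phi t))" for n
    by (intro intM' bnd_mult bnd_id_comp[where B=B] Fb bnd_id_comp[OF sn_bound]) auto
  have eq: "integral\<^sup>L (mu (sn n)) F = integral\<^sup>L M (\<lambda>t. F (Phi t)) / 2 + integral\<^sup>L M (\<lambda>t. sn n t * F (Phi t)) / 2" for n
  proof -
    have "integral\<^sup>L (mu (sn n)) F = integral\<^sup>L M (\<lambda>t. F (Phi t) / 2 + sn n t * F (Phi t) / 2)"
      by (simp add: integral_mu[OF good_sn] algebra_simps add_divide_distrib)
    also have "\<dots> = integral\<^sup>L M (\<lambda>t. F (Phi t)) / 2 + integral\<^sup>L M (\<lambda>t. sn n t * F (Phi t)) / 2"
      using iF isF by simp
    finally show ?thesis .
  qed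
  have z: "integral\<^sup>L (mu (\<lambda>_. 0)) F = integral\<^sup>L M (\<lambda>t. F (Phi t)) / 2"
    by (simp add: integral_mu[OF good_0])
  have "(\<lambda>n. integral\<^sup>L M (\<lambda>t. sn n t * F (Phi t))) \<longlonglongrightarrow> 0"
    by (rule bessel[where B=B]) (auto simp: Fb)
  then have "(\<lambda>n. integral\<^sup>L M (\<lambda>t. F (Phi t)) / 2 + integral\<^sup>L M (\<lambda>t. sn n t * F (Phi t)) / 2)
      \<longlonglongrightarrow> integral\<^sup>L M (\<lambda>t. F (Phi t)) / 2 + 0 / 2"
    by (intro tendsto_intros) auto
  then show ?thesis unfolding eq z by simp
qed

lemma fst_mu: "fst \<in> measurable (mu s) (borel::real measure)"
  by (subst measurable_cong_sets[OF sets_mu refl]) (intro borel_measurable_continuous_onI continuous_intros)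

lemma prior_emeasure:
  assumes g: "good s" and A: "A \<in> sets borel"
  shows "emeasure (prior (mu s)) A = ennreal (integral\<^sup>L M (\<lambda>t. indicator A (sgn t) / 2))"
proof -
  interpret prob_space "mu s" by (rule prob_mu[OF g])
  have [measurable]: "s \<in> borel_measurable borel" and b: "\<And>t. \<bar>s t\<bar> \<le> 1"
    and odd: "\<And>t. s (-t) = - s t" and ssgn: "integral\<^sup>L M (\<lambda>t. s t * sgn t) = 0"
    using g by (auto simp: good_def)
  have Am[measurable]: "A \<in> sets borel" by fact
  have fA[measurable]: "fst -` A \<in> sets (borel :: (real \<times> real \<times> real) measure)"
    using measurable_sets[OF fst_mu[of s] A] by simp
  define I where "I t = (indicator A (sgn t) :: real)" for t
  define \<alpha> where "\<alpha> = (I 1 + I (-1)) / 2"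
  define \<beta> where "\<beta> = (I 1 - I (-1)) / 2"
  have [measurable]: "I \<in> borel_measurable borel" unfolding I_def by measurable
  have Ib: "\<bar>I t\<bar> \<le> 1" for t by (simp add: I_def indicator_def)
  have key: "s t * I t = \<alpha> * s t + \<beta> * (s t * sgn t)" for t
  proof -
    consider "t > 0" | "t < 0" | "t = 0" by linarith
    then show ?thesis
    proof cases
      case 1 then show ?thesis by (simp add: I_def \<alpha>_def \<beta>_def field_simps)
    next
      case 2 then show ?thesis by (simp add: I_def \<alpha>_def \<beta>_def field_simps)
    next
      case 3 then show ?thesis using good_s0[OF g] by simp
    qed
  qed
  have iI: "integrable M I" by (intro intM' bnd_id_comp[OF Ib]) auto
  have is': "integrable M s" by (intro intM' bnd_id_comp[OF b]) auto
  have iss: "integrable M (\<lambda>t. s t * sgn t)" by (intro intM' bnd_intros bnd_id_comp[OF b]) auto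
  have "emeasure (prior (mu s)) A = emeasure (mu s) (fst -` A \<inter> space (mu s))"
    unfolding prior_def by (rule emeasure_distr) (simp_all add: A fst_mu)
  also have "\<dots> = emeasure (mu s) (fst -` A)" by simp
  also have "\<dots> = ennreal (measure (mu s) (fst -` A))" by (simp add: emeasure_eq_measure)
  also have "measure (mu s) (fst -` A) = integral\<^sup>L (mu s) (indicator (fst -` A))" by simp
  also have "\<dots> = integral\<^sup>L M (\<lambda>t. (1 + s t) / 2 * I t)"
    by (subst integral_mu[OF g]) (auto simp: I_def Phi_def indicator_def)
  also have "\<dots> = integral\<^sup>L M (\<lambda>t. I t / 2 + (\<alpha> * s t + \<beta> * (s t * sgn t)) / 2)"
  proof (rule arg_cong[where f="integral\<^sup>L M"], rule ext)
    fix t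
    have "(1 + s t) / 2 * I t = I t / 2 + (s t * I t) / 2" by (simp add: field_simps)
    then show "(1 + s t) / 2 * I t = I t / 2 + (\<alpha> * s t + \<beta> * (s t * sgn t)) / 2"
      by (simp only: key)
  qed
  also have "\<dots> = integral\<^sup>L M (\<lambda>t. I t / 2) + (\<alpha> * integral\<^sup>L M s + \<beta> * integral\<^sup>L M (\<lambda>t. s t * sgn t)) / 2"
    using iI is' iss by simp
  also have "\<dots> = integral\<^sup>L M (\<lambda>t. I t / 2)"
    using good_odd_int[OF g] ssgn by simp
  finally show ?thesis by (simp add: I_def)
qed

lemma sets_prior[simp]: "sets (prior \<mu>) = sets borel" by (simp add: prior_def)

lemma prior_mu: "good s \<Longrightarrow> prior (mu s) = prior (mu (\<lambda>_. 0))"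
  by (rule measure_eqI) (simp_all add: prior_emeasure good_0)

definition clamp :: "real \<Rightarrow> real" where "clamp x = max (-1) (min 1 x)"

definition cst :: "real \<times> real \<times> real \<Rightarrow> real" where
  "cst z = (fst (snd z))^2 - 2 * clamp (fst z) * fst (snd z)"

lemma clamp_cont: "continuous_on UNIV clamp"
  unfolding clamp_def by (intro continuous_intros)

lemma clamp_meas[measurable]: "clamp \<in> borel_measurable borel"
  by (rule borel_measurable_continuous_onI[OF clamp_cont])

lemma clamp_sgn[simp]: "clamp (sgn t) = sgn t"
  by (cases "t > 0"; cases "t < 0") (auto simp: clamp_def)

lemma clamp_bound: "\<bar>clamp x\<bar> \<le> 1" by (auto simp: clamp_def)

lemma cst_cont: "continuous_on UNIV cst"
  unfolding cst_def by (intro continuous_intros continuous_on_compose2[OF clamp_cont]) auto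

lemma A2_cst: "A2 cst {-1..1} {0}"
  unfolding A2_def
proof
  show "continuous_on (UNIV \<times> {-1..1} \<times> {0}) cst" using cst_cont by (rule continuous_on_subset) simp
  have "\<bar>cst z\<bar> \<le> 3" if zin: "z \<in> UNIV \<times> {-1..1} \<times> {0}" for z
  proof -
    obtain x u v where z: "z = (x, u, v)" and u: "\<bar>u\<bar> \<le> 1" using zin by (cases z) auto
    have "\<bar>u\<bar>^2 \<le> 1" using u by (simp add: abs_square_le_1)
    moreover have "\<bar>clamp x\<bar> * \<bar>u\<bar> \<le> 1" using clamp_bound u by (simp add: mult_le_one)
    moreover have "\<bar>cst z\<bar> \<le> \<bar>u\<bar>^2 + 2 * (\<bar>clamp x\<bar> * \<bar>u\<bar>)"
      unfolding z cst_def using abs_triangle_ineq4[of "u^2" "2 * clamp x * u"] by (simp add: abs_mult)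
    ultimately show ?thesis by linarith
  qed
  then show "bounded (cst ` (UNIV \<times> {-1..1} \<times> {0}))"
    unfolding bounded_iff by (intro exI[of _ 3]) auto
qed

lemma A4_U: "A4 {-1..1} {0}" unfolding A4_def by auto

lemma fst_b[measurable]: "(\<lambda>z::real\<times>real\<times>real. fst z) \<in> borel_measurable borel"
  by (intro borel_measurable_continuous_onI continuous_intros)
lemma fst_snd_b[measurable]: "(\<lambda>z::real\<times>real\<times>real. fst (snd z)) \<in> borel_measurable borel"
  by (intro borel_measurable_continuous_onI continuous_intros)

lemma J_form:
  assumes g: "good s" and d: "policy {-1..1} \<delta>"
  shows "J cst (mu s) \<delta> \<delta>2 = integral\<^sup>L M (\<lambda>t. (1 + s t) / 2 * ((\<delta> \<bar>t\<bar>)^2 - 2 * sgn t * \<delta> \<bar>t\<bar>))"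
proof -
  have [measurable]: "\<delta> \<in> borel_measurable borel" using d by (simp add: policy_def)
  have "J cst (mu s) \<delta> \<delta>2 = integral\<^sup>L (mu s) (\<lambda>z. (\<delta> (fst (snd z)))^2 - 2 * clamp (fst z) * \<delta> (fst (snd z)))"
    unfolding J_def cst_def case_prod_unfold by simp
  also have "\<dots> = integral\<^sup>L M (\<lambda>t. (1 + s t) / 2 * ((\<delta> \<bar>t\<bar>)^2 - 2 * sgn t * \<delta> \<bar>t\<bar>))"
    by (subst integral_mu[OF g]) (auto simp: Phi_def)
  finally show ?thesis .
qed

lemma s_abs:
  assumes g: "good s" shows "s t = sgn t * s \<bar>t\<bar>"
proof -
  have odd: "s (-t) = - s t" using g by (simp add: good_def)
  consider "t > 0" | "t < 0" | "t = 0" by linarith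
  then show ?thesis by cases (use odd good_s0[OF g] in auto)
qed

lemma policy_bound: "policy {-1..1} \<delta> \<Longrightarrow> \<bar>\<delta> y\<bar> \<le> 1"
  unfolding policy_def abs_le_iff by (metis atLeastAtMost_iff rangeI subsetD minus_le_iff)

lemma saddle_mu:
  assumes g: "good s"
  shows "saddle cst {-1..1} {0} (mu s) s (\<lambda>_. 0)"
proof -
  have [measurable]: "s \<in> borel_measurable borel" and b: "\<And>t. \<bar>s t\<bar> \<le> 1"
    and odd: "\<And>t. s (-t) = - s t" using g by (auto simp: good_def)
  have ps: "policy {-1..1} s" using b by (auto simp: policy_def abs_le_iff)
  have p0: "policy {0} (\<lambda>_. 0)" by (simp add: policy_def)
  have main: "J cst (mu s) s (\<lambda>_. 0) \<le> J cst (mu s) \<delta> (\<lambda>_. 0)" if pd: "policy {-1..1} \<delta>" for \<delta>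
  proof -
    have [measurable]: "\<delta> \<in> borel_measurable borel" using pd by (simp add: policy_def)
    have db: "\<bar>\<delta> \<bar>t\<bar>\<bar> \<le> 1" for t using policy_bound[OF pd] .
    have sb: "\<bar>s \<bar>t\<bar>\<bar> \<le> 1" for t using b .
    define A where "A t = (1 + s t) / 2 * ((\<delta> \<bar>t\<bar>)^2 - 2 * sgn t * \<delta> \<bar>t\<bar>)" for t
    define C where "C t = (1 + s t) / 2 * ((s \<bar>t\<bar>)^2 - 2 * sgn t * s \<bar>t\<bar>)" for t
    define P where "P t = (1 + s t) / 2 * (\<delta> \<bar>t\<bar> - s \<bar>t\<bar>)^2" for t
    define k where "k t = - sgn t * (1 - (s \<bar>t\<bar>)^2) * (\<delta> \<bar>t\<bar> - s \<bar>t\<bar>)" for t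
    have [measurable]: "A \<in> borel_measurable borel" "C \<in> borel_measurable borel"
      "P \<in> borel_measurable borel" "k \<in> borel_measurable borel"
      unfolding A_def C_def P_def k_def by measurable
    have bd: "bnd (\<lambda>t. \<delta> \<bar>t\<bar>)" "bnd (\<lambda>t. s \<bar>t\<bar>)" "bnd s"
      by (rule bnd_id_comp, rule db, rule bnd_id_comp, rule sb, rule bnd_id_comp, rule b)
    have iA: "integrable M A" unfolding A_def by (intro intM' bnd_intros bd) simp
    have iC: "integrable M C" unfolding C_def by (intro intM' bnd_intros bd) simp
    have iP: "integrable M P" unfolding P_def by (intro intM' bnd_intros bd) simp
    have iK: "integrable M k" unfolding k_def by (intro intM' bnd_intros bd) simp
    have pw: "A t = C t + P t + k t" for t
    proof -
      consider "t > 0" | "t < 0" | "t = 0" by linarith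
      then show ?thesis
      proof cases
        case 1 then show ?thesis by (simp add: A_def C_def P_def k_def field_simps power2_eq_square)
      next
        case 2
        then have "s t = - s \<bar>t\<bar>" using odd[of t] by simp
        with 2 show ?thesis by (simp add: A_def C_def P_def k_def field_simps power2_eq_square)
      next
        case 3 then show ?thesis using good_s0[OF g]
          by (simp add: A_def C_def P_def k_def field_simps power2_eq_square)
      qed
    qed
    have k0: "integral\<^sup>L M k = 0"
      by (rule odd_M) (auto simp: k_def)
    have P0: "0 \<le> integral\<^sup>L M P"
    proof (rule integral_nonneg_AE, rule AE_I2)
      fix t have "0 \<le> 1 + s t" using b[of t] by auto
      then show "0 \<le> P t" unfolding P_def by simp
    qed
    have "integral\<^sup>L M A = integral\<^sup>L M C + integral\<^sup>L M P + integral\<^sup>L M k"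
      unfolding pw[abs_def] using iA iC iP iK by simp
    then have "integral\<^sup>L M C \<le> integral\<^sup>L M A" using k0 P0 by simp
    then show ?thesis unfolding J_form[OF g pd] J_form[OF g ps] A_def C_def .
  qed
  show ?thesis
    unfolding saddle_def
  proof (intro conjI ps p0 allI impI)
    fix \<delta>1 \<delta>2 assume "policy {-1..1} \<delta>1 \<and> policy {0} \<delta>2"
    then have p1: "policy {-1..1} \<delta>1" by simp
    show "J cst (mu s) s \<delta>2 \<le> J cst (mu s) s (\<lambda>_. 0)"
      using J_form[OF g ps, of \<delta>2] J_form[OF g ps, of "\<lambda>_. 0"] by simp
    show "J cst (mu s) s (\<lambda>_. 0) \<le> J cst (mu s) \<delta>1 (\<lambda>_. 0)" by (rule main[OF p1])
  qed
qed

lemma J_val: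
  assumes g: "good s"
  shows "J cst (mu s) s (\<lambda>_. 0) = - integral\<^sup>L M (\<lambda>t. (s t)^2) / 2"
proof -
  have [measurable]: "s \<in> borel_measurable borel" and b: "\<And>t. \<bar>s t\<bar> \<le> 1"
    and odd: "\<And>t. s (-t) = - s t" using g by (auto simp: good_def)
  have ps: "policy {-1..1} s" using b by (auto simp: policy_def abs_le_iff)
  have bs: "bnd s" by (rule bnd_id_comp, rule b)
  have pw: "(1 + s t) / 2 * ((s \<bar>t\<bar>)^2 - 2 * sgn t * s \<bar>t\<bar>) = (s t)^3 / 2 - (s t)^2 / 2 - s t" for t
  proof -
    consider "t > 0" | "t < 0" | "t = 0" by linarith
    then show ?thesis
    proof cases
      case 1 then show ?thesis by (simp add: field_simps power2_eq_square power3_eq_cube)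
    next
      case 2
      then have "s \<bar>t\<bar> = - s t" using odd[of t] by simp
      with 2 show ?thesis by (simp add: field_simps power2_eq_square power3_eq_cube)
    next
      case 3 then show ?thesis using good_s0[OF g] by simp
    qed
  qed
  have i3: "integrable M (\<lambda>t. (s t)^3)" by (intro intM' bnd_intros bs) simp
  have i2: "integrable M (\<lambda>t. (s t)^2)" by (intro intM' bnd_intros bs) simp
  have i1: "integrable M s" by (intro intM' bs) simp
  have o3: "integral\<^sup>L M (\<lambda>t. (s t)^3) = 0" by (rule odd_M) (auto simp: odd)
  have "J cst (mu s) s (\<lambda>_. 0) = integral\<^sup>L M (\<lambda>t. (s t)^3 / 2 - (s t)^2 / 2 - s t)"
    unfolding J_form[OF g ps] pw ..
  also have "\<dots> = integral\<^sup>L M (\<lambda>t. (s t)^3) / 2 - integral\<^sup>L M (\<lambda>t. (s t)^2) / 2 - integral\<^sup>L M s"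
    using i1 i2 i3 by simp
  finally show ?thesis using o3 good_odd_int[OF g] by simp
qed

lemma vd:
  assumes conv_ok: "conv (\<lambda>n. mu (sn n)) (mu (\<lambda>_. 0))"
  shows "value_discontinuity conv"
proof -
  have info: "info_structure (mu s)" if "good s" for s
    using prob_mu[OF that] by (simp add: info_structure_def)
  have Jn: "J cst (mu (sn n)) (sn n) (\<lambda>_. 0) = - 1/2" for n
    using J_val[OF good_sn, of n] sn_orth[of n n] by (simp add: power2_eq_square)
  have J0: "J cst (mu (\<lambda>_. 0)) (\<lambda>_. 0) (\<lambda>_. 0) = 0"
    using J_val[OF good_0] by simp
  have nc: "\<not> (\<lambda>n. J cst (mu (sn n)) (sn n) (\<lambda>_. 0)) \<longlonglongrightarrow> J cst (mu (\<lambda>_. 0)) (\<lambda>_. 0) (\<lambda>_. 0)"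
  proof
    assume "(\<lambda>n. J cst (mu (sn n)) (sn n) (\<lambda>_. 0)) \<longlonglongrightarrow> J cst (mu (\<lambda>_. 0)) (\<lambda>_. 0) (\<lambda>_. 0)"
    then have "(\<lambda>n. - 1/2 :: real) \<longlonglongrightarrow> 0" unfolding Jn J0 .
    then have "- 1/2 = (0::real)" using tendsto_const LIMSEQ_unique by blast
    then show False by simp
  qed
  show ?thesis
    unfolding value_discontinuity_def
    apply (rule exI[of _ cst], rule exI[of _ "{-1..1}"], rule exI[of _ "{0}"],
        rule exI[of _ "prior (mu (\<lambda>_. 0))"], rule exI[of _ "\<lambda>n. mu (sn n)"],
        rule exI[of _ "mu (\<lambda>_. 0)"], rule exI[of _ "\<lambda>n. sn n"], rule exI[of _ "\<lambda>n. (\<lambda>_. 0)"],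
        rule exI[of _ "\<lambda>_. 0"], rule exI[of _ "\<lambda>_. 0"])
    using A2_cst A4_U info[OF good_0] info[OF good_sn] prior_mu[OF good_sn] conv_ok
      saddle_mu[OF good_sn] saddle_mu[OF good_0] nc
    by auto
qed

lemma weak_ok: "weak_conv_info (\<lambda>n. mu (sn n)) (mu (\<lambda>_. 0))"
  unfolding weak_conv_info_def
proof (intro allI impI)
  fix f :: "real \<times> real \<times> real \<Rightarrow> real"
  assume "continuous_on UNIV f \<and> bounded (range f)"
  then have c: "continuous_on UNIV f" and bd: "bounded (range f)" by auto
  obtain B where B: "\<And>z. \<bar>f z\<bar> \<le> B" using bd unfolding bounded_iff by auto
  have [measurable]: "f \<in> borel_measurable borel" by (rule borel_measurable_continuous_onI[OF c])
  show "(\<lambda>n. integral\<^sup>L (mu (sn n)) f) \<longlonglongrightarrow> integral\<^sup>L (mu (\<lambda>_. 0)) f"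
    by (rule conv_mu[OF _ B]) simp
qed

lemma setwise_ok: "setwise_conv (\<lambda>n. mu (sn n)) (mu (\<lambda>_. 0))"
  unfolding setwise_conv_def
proof
  fix A :: "(real \<times> real \<times> real) set" assume [measurable]: "A \<in> sets borel"
  have "(\<lambda>n. integral\<^sup>L (mu (sn n)) (indicator A)) \<longlonglongrightarrow> integral\<^sup>L (mu (\<lambda>_. 0)) (indicator A :: _ \<Rightarrow> real)"
    by (rule conv_mu[where B=1]) (auto simp: indicator_def)
  then show "(\<lambda>n. measure (mu (sn n)) A) \<longlonglongrightarrow> measure (mu (\<lambda>_. 0)) A" by simp
qed

theorem theorem3p1:
  shows "value_discontinuity weak_conv_info \<and> value_discontinuity setwise_conv"
  using vd[where conv=weak_conv_info, OF weak_ok] vd[where conv=setwise_conv, OF setwise_ok] by simp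

end
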